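(* Assume each bus has either no generator or at least two generators, and $x^*_n>0$ for all $n$; let $b^*_n=2a_nx^*_n+c_n$. Consider any execution of the Bid Adjustment Algorithm with $0<\beta_k<2a_n$ for all $n$ and $k\ge1$, and let $a_{\min}=\min_na_n$ and $\bar y=\sum_{i=1}^{N_b}y_i$. Then for all $k\ge1$, $$\|b(k+1)-b(k)\|^2\ \le\ \frac{\beta_k^2}{2a_{\min}^2}\|b(k)-b^*\|^2+8\beta_k^2\bar y^2.$$
   Context: Network: directed graph with buses $\{1,\dots,N_b\}$, edge set $\mathcal E$, line flow limits $\bar z_{ij}>0$, $G_i$ the set of generators at bus $i$ (the $G_i$ partition $\{1,\dots,N\}$), loads $y_i\ge0$. Generator $n$ has cost $f_n(x)=a_nx^2+c_nx$, $a_n>0$, $c_n\ge0$. DC-OPF: minimize $\sum_n f_n(x_n)$ over $(x,z)$ s.t. $\sum_{j:(i,j)\in\mathcal E}z_{ij}-\sum_{j:(j,i)\in\mathcal E}z_{ji}=\sum_{n\in G_i}x_n-y_i$ for all $i$, $|z_{ij}|\le\bar z_{ij}$, $x\ge0$; assumed feasible with unique optimal generation $x^*$. S-DC-OPF given bids $b\ge0$: same constraints, objective $\sum_n b_nx_n$. $\|\cdot\|$ is the Euclidean norm. Bid Adjustment Algorithm: given stepsizes $\beta_k>0$, each generator picks $b_n(1)\ge c_n$. For each $k\ge1$: $q_n(k)=\arg\max_{q\ge0}(b_n(k)q-f_n(q))$; the operator selects an optimizer $(x^{\rm opt}(k),z^{\rm opt}(k))$ of S-DC-OPF with bids $b(k)$;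 and $b_n(k+1)=[\,b_n(k)+\beta_k(x^{\rm opt}_n(k)-q_n(k))\,]^+$, where $[u]^+=\max\{0,u\}$. *)

theory Defs
  imports Complex_Main
begin

text \<open>Buses are 1..Nb, generators are 1..N. Edges are pairs of buses (directed),
flows z are indexed by edges, generation vectors x by generator indices.\<close>

definition gen_cost :: "(nat \<Rightarrow> real) \<Rightarrow> (nat \<Rightarrow> real) \<Rightarrow> nat \<Rightarrow> real \<Rightarrow> real" where
  "gen_cost a c n x = a n * x\<^sup>2 + c n * x"

definition opf_feasible ::
  "nat \<Rightarrow> nat \<Rightarrow> (nat \<times> nat) set \<Rightarrow> (nat \<times> nat \<Rightarrow> real) \<Rightarrow> (nat \<Rightarrow> nat set) \<Rightarrow> (nat \<Rightarrow> real)
   \<Rightarrow> (nat \<Rightarrow> real) \<Rightarrow> (nat \<times> nat \<Rightarrow> real) \<Rightarrow> bool" where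
  "opf_feasible Nb N E zbar G y x z \<longleftrightarrow>
     (\<forall>i\<in>{1..Nb}. (\<Sum>e\<in>{e\<in>E. fst e = i}. z e) - (\<Sum>e\<in>{e\<in>E. snd e = i}. z e)
                   = (\<Sum>n\<in>G i. x n) - y i) \<and>
     (\<forall>e\<in>E. \<bar>z e\<bar> \<le> zbar e) \<and>
     (\<forall>n\<in>{1..N}. 0 \<le> x n)"

definition dcopf_optimal ::
  "nat \<Rightarrow> nat \<Rightarrow> (nat \<times> nat) set \<Rightarrow> (nat \<times> nat \<Rightarrow> real) \<Rightarrow> (nat \<Rightarrow> nat set) \<Rightarrow> (nat \<Rightarrow> real)
   \<Rightarrow> (nat \<Rightarrow> real) \<Rightarrow> (nat \<Rightarrow> real) \<Rightarrow> (nat \<Rightarrow> real) \<Rightarrow> bool" where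
  "dcopf_optimal Nb N E zbar G y a c x \<longleftrightarrow>
     (\<exists>z. opf_feasible Nb N E zbar G y x z \<and>
        (\<forall>x' z'. opf_feasible Nb N E zbar G y x' z' \<longrightarrow>
           (\<Sum>n\<in>{1..N}. gen_cost a c n (x n)) \<le> (\<Sum>n\<in>{1..N}. gen_cost a c n (x' n))))"

definition sdcopf_optimal ::
  "nat \<Rightarrow> nat \<Rightarrow> (nat \<times> nat) set \<Rightarrow> (nat \<times> nat \<Rightarrow> real) \<Rightarrow> (nat \<Rightarrow> nat set) \<Rightarrow> (nat \<Rightarrow> real)
   \<Rightarrow> (nat \<Rightarrow> real) \<Rightarrow> (nat \<Rightarrow> real) \<Rightarrow> (nat \<times> nat \<Rightarrow> real) \<Rightarrow> bool" where
  "sdcopf_optimal Nb N E zbar G y b x z \<longleftrightarrow>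
     opf_feasible Nb N E zbar G y x z \<and>
     (\<forall>x' z'. opf_feasible Nb N E zbar G y x' z' \<longrightarrow>
        (\<Sum>n\<in>{1..N}. b n * x n) \<le> (\<Sum>n\<in>{1..N}. b n * x' n))"

definition vnorm :: "nat \<Rightarrow> (nat \<Rightarrow> real) \<Rightarrow> real" where
  "vnorm N v = sqrt (\<Sum>n\<in>{1..N}. (v n)\<^sup>2)"

end

theory Submission
  imports Defs
begin

lemma q_formula:
  fixes a b c q :: real
  assumes a: "a > 0" and q: "q \<ge> 0"
    and mx: "\<And>s. s \<ge> 0 \<Longrightarrow> b * s - (a * s\<^sup>2 + c * s) \<le> b * q - (a * q\<^sup>2 + c * q)"
  shows "q = max 0 ((b - c) / (2 * a))"
proof -
  define p where "p = max 0 ((b - c) / (2 * a))"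
  have p0: "p \<ge> 0" unfolding p_def by simp
  have h: "b * p - (a * p\<^sup>2 + c * p) \<le> b * q - (a * q\<^sup>2 + c * q)" using mx[OF p0] .
  have g: "(b * p - (a * p\<^sup>2 + c * p)) - (b * q - (a * q\<^sup>2 + c * q)) \<ge> a * (p - q)\<^sup>2"
  proof (cases "b \<ge> c")
    case True
    then have "p = (b - c) / (2 * a)" unfolding p_def using a by simp
    then have "b - c = 2 * a * p" using a by (simp add: field_simps)
    then have "(b * p - (a * p\<^sup>2 + c * p)) - (b * q - (a * q\<^sup>2 + c * q)) = a * (p - q)\<^sup>2"
      by (simp add: algebra_simps power2_eq_square)
    then show ?thesis by simp
  next
    case False
    then have "(b - c) / (2 * a) < 0" using a by (simp add: divide_neg_pos)
    then have "p = 0" unfolding p_def by simp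
    moreover have "- ((b - c) * q) \<ge> 0" using False q by (simp add: mult_nonpos_nonneg)
    ultimately show ?thesis by (simp add: algebra_simps power2_eq_square)
  qed
  have "a * (p - q)\<^sup>2 \<le> 0" using g h by linarith
  then have "(p - q)\<^sup>2 \<le> 0" using a by (simp add: mult_le_0_iff)
  then have "p = q" by simp
  then show ?thesis unfolding p_def by simp
qed

lemma v_bound:
  fixes a b c x m :: real
  assumes a: "a > 0" and x: "x \<ge> 0" and m: "0 < m" "m \<le> a"
  shows "(x - max 0 ((b - c) / (2 * a)))\<^sup>2 \<le> (b - (2 * a * x + c))\<^sup>2 / (4 * m\<^sup>2)"
proof -
  define t where "t = (b - c) / (2 * a)"
  have "\<bar>x - max 0 t\<bar> \<le> \<bar>t - x\<bar>" using x by (auto simp: max_def)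
  then have "(x - max 0 t)\<^sup>2 \<le> (t - x)\<^sup>2"
    by (metis abs_le_square_iff power2_abs)
  also have "t - x = (b - (2 * a * x + c)) / (2 * a)" unfolding t_def using a by (simp add: field_simps)
  also have "((b - (2 * a * x + c)) / (2 * a))\<^sup>2 = (b - (2 * a * x + c))\<^sup>2 / (4 * a\<^sup>2)"
    by (simp add: power_divide power_mult_distrib)
  also have "\<dots> \<le> (b - (2 * a * x + c))\<^sup>2 / (4 * m\<^sup>2)"
    using m by (intro divide_left_mono mult_pos_pos) (auto intro: power_mono)
  finally show ?thesis unfolding t_def .
qed

lemma feas_sum:
  assumes edges: "E \<subseteq> {1..Nb} \<times> {1..Nb}"
    and G_sub: "\<forall>i\<in>{1..Nb}. G i \<subseteq> {1..N}"
    and G_disj: "\<forall>i\<in>{1..Nb}. \<forall>j\<in>{1..Nb}. i \<noteq> j \<longrightarrow> G i \<inter> G j = {}"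
    and G_cover: "(\<Union>i\<in>{1..Nb}. G i) = {1..N}"
    and f: "opf_feasible Nb N E zbar G y x z"
  shows "(\<Sum>n\<in>{1..N}. x n) = (\<Sum>i\<in>{1..Nb}. y i)"
proof -
  have fE: "finite E" using edges finite_subset by blast
  have bal: "\<forall>i\<in>{1..Nb}. (\<Sum>n\<in>G i. x n) = y i + ((\<Sum>e\<in>{e\<in>E. fst e = i}. z e) - (\<Sum>e\<in>{e\<in>E. snd e = i}. z e))"
    using f unfolding opf_feasible_def by auto
  have fG: "\<forall>i\<in>{1..Nb}. finite (G i)" using G_sub finite_subset by blast
  have "(\<Sum>n\<in>{1..N}. x n) = (\<Sum>i\<in>{1..Nb}. \<Sum>n\<in>G i. x n)"
    unfolding G_cover[symmetric] by (rule sum.UNION_disjoint) (use fG G_disj in auto)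
  also have "\<dots> = (\<Sum>i\<in>{1..Nb}. y i) + ((\<Sum>i\<in>{1..Nb}. \<Sum>e\<in>{e\<in>E. fst e = i}. z e) - (\<Sum>i\<in>{1..Nb}. \<Sum>e\<in>{e\<in>E. snd e = i}. z e))"
    using bal by (simp add: sum.distrib sum_subtractf)
  also have "(\<Sum>i\<in>{1..Nb}. \<Sum>e\<in>{e\<in>E. fst e = i}. z e) = (\<Sum>e\<in>E. z e)"
    by (rule sum.group) (use fE edges in auto)
  also have "(\<Sum>i\<in>{1..Nb}. \<Sum>e\<in>{e\<in>E. snd e = i}. z e) = (\<Sum>e\<in>E. z e)"
    by (rule sum.group) (use fE edges in auto)
  finally show ?thesis by simp
qed

lemma sumsq_le:
  fixes d :: "nat \<Rightarrow> real"
  assumes "finite A"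
  shows "(\<Sum>n\<in>A. (d n)\<^sup>2) \<le> (\<Sum>n\<in>A. \<bar>d n\<bar>)\<^sup>2"
proof -
  have "(\<Sum>n\<in>A. (d n)\<^sup>2) = (\<Sum>n\<in>A. \<bar>d n\<bar> * \<bar>d n\<bar>)" by (simp add: power2_eq_square abs_mult_self_eq)
  also have "\<dots> \<le> (\<Sum>n\<in>A. \<bar>d n\<bar> * (\<Sum>m\<in>A. \<bar>d m\<bar>))"
    by (intro sum_mono mult_left_mono member_le_sum) (use assms in auto)
  also have "\<dots> = (\<Sum>n\<in>A. \<bar>d n\<bar>)\<^sup>2" by (simp add: power2_eq_square sum_distrib_right)
  finally show ?thesis .
qed

theorem lemma4p4:
  fixes Nb N :: nat and E :: "(nat \<times> nat) set" and zbar :: "nat \<times> nat \<Rightarrow> real"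
    and G :: "nat \<Rightarrow> nat set" and y a c xstar :: "nat \<Rightarrow> real"
    and beta :: "nat \<Rightarrow> real"
    and b q xopt :: "nat \<Rightarrow> nat \<Rightarrow> real" and zopt :: "nat \<Rightarrow> nat \<times> nat \<Rightarrow> real"
    and k :: nat
  assumes edges: "E \<subseteq> {1..Nb} \<times> {1..Nb}"
    and zbar_pos: "\<forall>e\<in>E. 0 < zbar e"
    and G_sub: "\<forall>i\<in>{1..Nb}. G i \<subseteq> {1..N}"
    and G_disj: "\<forall>i\<in>{1..Nb}. \<forall>j\<in>{1..Nb}. i \<noteq> j \<longrightarrow> G i \<inter> G j = {}"
    and G_cover: "(\<Union>i\<in>{1..Nb}. G i) = {1..N}"
    and loads: "\<forall>i\<in>{1..Nb}. 0 \<le> y i"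
    and a_pos: "\<forall>n\<in>{1..N}. 0 < a n"
    and c_nonneg: "\<forall>n\<in>{1..N}. 0 \<le> c n"
    and xstar_opt: "dcopf_optimal Nb N E zbar G y a c xstar"
    and xstar_unique: "\<forall>x. dcopf_optimal Nb N E zbar G y a c x \<longrightarrow> (\<forall>n\<in>{1..N}. x n = xstar n)"
    and bus_gens: "\<forall>i\<in>{1..Nb}. G i = {} \<or> 2 \<le> card (G i)"
    and xstar_pos: "\<forall>n\<in>{1..N}. 0 < xstar n"
    and beta_bounds: "\<forall>k'\<ge>1. \<forall>n\<in>{1..N}. 0 < beta k' \<and> beta k' < 2 * a n"
    and b_init: "\<forall>n\<in>{1..N}. c n \<le> b 1 n"
    and q_def: "\<forall>k'\<ge>1. \<forall>n\<in>{1..N}.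
                  is_arg_max (\<lambda>s. b k' n * s - gen_cost a c n s) (\<lambda>s. 0 \<le> s) (q k' n)"
    and xopt_def: "\<forall>k'\<ge>1. sdcopf_optimal Nb N E zbar G y (b k') (xopt k') (zopt k')"
    and b_update: "\<forall>k'\<ge>1. \<forall>n\<in>{1..N}.
                  b (Suc k') n = max 0 (b k' n + beta k' * (xopt k' n - q k' n))"
    and k_ge: "1 \<le> k"
  shows "(vnorm N (\<lambda>n. b (Suc k) n - b k n))\<^sup>2
           \<le> (beta k)\<^sup>2 / (2 * (Min (a ` {1..N}))\<^sup>2)
               * (vnorm N (\<lambda>n. b k n - (2 * a n * xstar n + c n)))\<^sup>2
             + 8 * (beta k)\<^sup>2 * (\<Sum>i\<in>{1..Nb}. y i)\<^sup>2"
proof -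
  let ?m = "Min (a ` {1..N})"
  let ?Y = "\<Sum>i\<in>{1..Nb}. y i"
  let ?bs = "\<lambda>n. 2 * a n * xstar n + c n"
  let ?B = "beta k"
  have bnn: "\<forall>n\<in>{1..N}. 0 \<le> b k n"
  proof (cases k)
    case 0 then show ?thesis using k_ge by simp
  next
    case (Suc k')
    show ?thesis
    proof (cases "k' = 0")
      case True then show ?thesis using Suc b_init c_nonneg by force
    next
      case False then show ?thesis using Suc b_update by simp
    qed
  qed
  have qf: "\<forall>n\<in>{1..N}. q k n = max 0 ((b k n - c n) / (2 * a n))"
  proof
    fix n assume n: "n \<in> {1..N}"
    have am: "is_arg_max (\<lambda>s. b k n * s - gen_cost a c n s) (\<lambda>s. 0 \<le> s) (q k n)"
      using q_def k_ge n by auto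
    show "q k n = max 0 ((b k n - c n) / (2 * a n))"
      by (rule q_formula) (use am a_pos n in \<open>auto simp: is_arg_max_def gen_cost_def not_less\<close>)
  qed
  have feas: "opf_feasible Nb N E zbar G y (xopt k) (zopt k)"
    using xopt_def k_ge unfolding sdcopf_optimal_def by auto
  obtain zs where feass: "opf_feasible Nb N E zbar G y xstar zs"
    using xstar_opt unfolding dcopf_optimal_def by auto
  have xo0: "\<forall>n\<in>{1..N}. 0 \<le> xopt k n" using feas unfolding opf_feasible_def by auto
  have s1: "(\<Sum>n\<in>{1..N}. xopt k n) = ?Y" by (rule feas_sum[OF edges G_sub G_disj G_cover feas])
  have s2: "(\<Sum>n\<in>{1..N}. xstar n) = ?Y" by (rule feas_sum[OF edges G_sub G_disj G_cover feass])
  have wsum: "(\<Sum>n\<in>{1..N}. (xopt k n - xstar n)\<^sup>2) \<le> 4 * ?Y\<^sup>2"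
  proof -
    have A: "(\<Sum>n\<in>{1..N}. (xopt k n - xstar n)\<^sup>2) \<le> (\<Sum>n\<in>{1..N}. \<bar>xopt k n - xstar n\<bar>)\<^sup>2"
      by (rule sumsq_le) simp
    have B: "(\<Sum>n\<in>{1..N}. \<bar>xopt k n - xstar n\<bar>) \<le> (\<Sum>n\<in>{1..N}. xopt k n + xstar n)"
      by (rule sum_mono) (use xo0 xstar_pos in force)
    have C: "(\<Sum>n\<in>{1..N}. xopt k n + xstar n) = 2 * ?Y" by (simp only: sum.distrib s1 s2)
    have "(\<Sum>n\<in>{1..N}. \<bar>xopt k n - xstar n\<bar>)\<^sup>2 \<le> (2 * ?Y)\<^sup>2"
      using B C by (intro power_mono) (auto intro: sum_nonneg)
    with A show ?thesis by (simp add: power_mult_distrib)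
  qed
  have lhs: "(vnorm N (\<lambda>n. b (Suc k) n - b k n))\<^sup>2 = (\<Sum>n\<in>{1..N}. (b (Suc k) n - b k n)\<^sup>2)"
    unfolding vnorm_def by (simp add: sum_nonneg)
  have rhs: "(vnorm N (\<lambda>n. b k n - ?bs n))\<^sup>2 = (\<Sum>n\<in>{1..N}. (b k n - ?bs n)\<^sup>2)"
    unfolding vnorm_def by (simp add: sum_nonneg)
  show ?thesis
  proof (cases "N = 0")
    case True
    then show ?thesis unfolding lhs rhs by simp
  next
    case False
    have fin: "finite (a ` {1..N})" and ne: "a ` {1..N} \<noteq> {}" using False by auto
    have m0: "0 < ?m" using a_pos fin ne by (subst Min_gr_iff) auto
    have ma: "\<forall>n\<in>{1..N}. ?m \<le> a n" using fin by auto
    have step: "(b (Suc k) n - b k n)\<^sup>2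
        \<le> ?B\<^sup>2 * (2 * (xopt k n - xstar n)\<^sup>2 + 2 * ((b k n - ?bs n)\<^sup>2 / (4 * ?m\<^sup>2)))"
      if n: "n \<in> {1..N}" for n
    proof -
      have bu: "b (Suc k) n = max 0 (b k n + ?B * (xopt k n - q k n))" using b_update k_ge n by auto
      have "\<bar>b (Suc k) n - b k n\<bar> \<le> \<bar>?B * (xopt k n - q k n)\<bar>" unfolding bu
      proof -
        have "0 \<le> b k n" using bnn n by auto
        then show "\<bar>max 0 (b k n + ?B * (xopt k n - q k n)) - b k n\<bar> \<le> \<bar>?B * (xopt k n - q k n)\<bar>"
          by (simp add: max_def abs_if)
      qed
      then have "(b (Suc k) n - b k n)\<^sup>2 \<le> (?B * (xopt k n - q k n))\<^sup>2"
        by (metis abs_le_square_iff power2_abs)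
      also have "\<dots> = ?B\<^sup>2 * (xopt k n - q k n)\<^sup>2" by (simp add: power_mult_distrib)
      also have "(xopt k n - q k n)\<^sup>2 \<le> 2 * (xopt k n - xstar n)\<^sup>2 + 2 * (xstar n - q k n)\<^sup>2"
      proof -
        have "0 \<le> ((xopt k n - xstar n) - (xstar n - q k n))\<^sup>2" by simp
        then show ?thesis by (simp add: power2_eq_square algebra_simps)
      qed
      also have "(xstar n - q k n)\<^sup>2 \<le> (b k n - ?bs n)\<^sup>2 / (4 * ?m\<^sup>2)"
        unfolding qf[rule_format, OF n]
        by (rule v_bound) (use a_pos xstar_pos n m0 ma in \<open>auto intro: less_imp_le\<close>)
      finally show ?thesis by (simp add: mult_left_mono)
    qed
    have "(\<Sum>n\<in>{1..N}. (b (Suc k) n - b k n)\<^sup>2)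
        \<le> (\<Sum>n\<in>{1..N}. ?B\<^sup>2 * (2 * (xopt k n - xstar n)\<^sup>2 + 2 * ((b k n - ?bs n)\<^sup>2 / (4 * ?m\<^sup>2))))"
      by (rule sum_mono) (rule step)
    also have "\<dots> = ?B\<^sup>2 * (2 * (\<Sum>n\<in>{1..N}. (xopt k n - xstar n)\<^sup>2))
        + ?B\<^sup>2 / (2 * ?m\<^sup>2) * (\<Sum>n\<in>{1..N}. (b k n - ?bs n)\<^sup>2)"
      by (simp add: sum.distrib sum_distrib_left sum_divide_distrib algebra_simps)
    also have "\<dots> \<le> ?B\<^sup>2 * (2 * (4 * ?Y\<^sup>2)) + ?B\<^sup>2 / (2 * ?m\<^sup>2) * (\<Sum>n\<in>{1..N}. (b k n - ?bs n)\<^sup>2)"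
      using wsum by (intro add_right_mono mult_left_mono) auto
    finally show ?thesis unfolding lhs rhs by (simp add: algebra_simps)
  qed
qed

end
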